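(* For every $n\ge1$, $\mathcal{S}_n(0121,0132)=\mathcal{S}_n(0121,1032)=\mathcal{S}_n(0121,0132,1032)$.
   Context: An ascent sequence of length $n$ is a sequence $x_1\cdots x_n$ of non-negative integers with $x_1=0$ and $x_i\le 1+\#\{j<i-1: x_j<x_{j+1}\}$ for $1<i\le n$ (i.e. at most one more than the number of ascents among the first $i-1$ letters). A sequence $\pi$ contains a pattern $\tau$ (a sequence of non-negative integers) if some subsequence of $\pi$ is order-isomorphic to $\tau$ (same relative order, equal letters to equal letters); otherwise it avoids $\tau$. $\mathcal{S}_n(T)$ is the set of ascent sequences of length $n$ avoiding all patterns in $T$. *)

theory Defs
  imports Main
begin

definition asc_count :: "nat list \<Rightarrow> nat" where
  "asc_count xs = card {j. Suc j < length xs \<and> xs ! j < xs ! Suc j}"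

definition is_ascent_seq :: "nat list \<Rightarrow> bool" where
  "is_ascent_seq xs \<longleftrightarrow> (xs \<noteq> [] \<longrightarrow> xs ! 0 = 0) \<and>
     (\<forall>i. 0 < i \<and> i < length xs \<longrightarrow> xs ! i \<le> 1 + asc_count (take i xs))"

definition order_iso :: "nat list \<Rightarrow> nat list \<Rightarrow> bool" where
  "order_iso xs ys \<longleftrightarrow> length xs = length ys \<and>
     (\<forall>a < length xs. \<forall>b < length xs. (xs ! a < xs ! b \<longleftrightarrow> ys ! a < ys ! b)
                                     \<and> (xs ! a = xs ! b \<longleftrightarrow> ys ! a = ys ! b))"

definition contains :: "nat list \<Rightarrow> nat list \<Rightarrow> bool" where
  "contains \<pi> \<tau> \<longleftrightarrow> (\<exists>I. I \<subseteq> {..<length \<pi>} \<and> order_iso (nths \<pi> I) \<tau>)"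

definition avoids :: "nat list \<Rightarrow> nat list \<Rightarrow> bool" where
  "avoids \<pi> \<tau> \<longleftrightarrow> \<not> contains \<pi> \<tau>"

definition S :: "nat \<Rightarrow> nat list set \<Rightarrow> nat list set" where
  "S n T = {xs. length xs = n \<and> is_ascent_seq xs \<and> (\<forall>\<tau>\<in>T. avoids xs \<tau>)}"

end

theory Submission
  imports Defs
begin

lemma nths_extract:
  "nths xs I = ys \<Longrightarrow> \<exists>f. (\<forall>a b. a<b \<longrightarrow> b<length ys \<longrightarrow> f a < f b) \<and>
     (\<forall>t<length ys. f t < length xs \<and> ys!t = xs!(f t))"
proof (induction xs arbitrary: I ys)
  case Nil
  then show ?case by auto
next
  case (Cons x xs)
  obtain g where g: "\<forall>a b. a<b \<longrightarrow> b<length (nths xs {j. Suc j \<in> I}) \<longrightarrow> g a < g b"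
     "\<forall>t<length (nths xs {j. Suc j \<in> I}). g t < length xs \<and> nths xs {j. Suc j \<in> I}!t = xs!(g t)"
    using Cons.IH by blast
  show ?case
  proof (cases "0 \<in> I")
    case True
    then have ys: "ys = x # nths xs {j. Suc j \<in> I}" using Cons.prems by (simp add: nths_Cons)
    define f where "f t = (case t of 0 \<Rightarrow> 0 | Suc t' \<Rightarrow> Suc (g t'))" for t
    show ?thesis
      apply (rule exI[of _ f])
      using g unfolding ys f_def
      by (auto split: nat.split simp: less_Suc_eq_0_disj)
  next
    case False
    then have ys: "ys = nths xs {j. Suc j \<in> I}" using Cons.prems by (simp add: nths_Cons)
    show ?thesis
      apply (rule exI[of _ "\<lambda>t. Suc (g t)"])
      using g unfolding ys by auto
  qed
qed



lemma shift_set: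
  assumes "\<forall>j\<in>set js. j > 0"
  shows "{j. Suc j \<in> set js} = set (map (\<lambda>j. j - 1) js)"
proof
  show "{j. Suc j \<in> set js} \<subseteq> set (map (\<lambda>j. j - 1) js)"
  proof
    fix j assume "j \<in> {j. Suc j \<in> set js}"
    then have "Suc j \<in> set js" by simp
    then show "j \<in> set (map (\<lambda>j. j - 1) js)" by (metis diff_Suc_1 image_eqI set_map)
  qed
  show "set (map (\<lambda>j. j - 1) js) \<subseteq> {j. Suc j \<in> set js}"
  proof
    fix j assume "j \<in> set (map (\<lambda>j. j - 1) js)"
    then obtain j' where "j' \<in> set js" "j = j' - 1" by auto
    then show "j \<in> {j. Suc j \<in> set js}" using assms by simp
  qed
qed

lemma sorted_shift:
  fixes js :: "nat list"
  assumes "sorted_wrt (<) js" "\<forall>j\<in>set js. j > 0"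
  shows "sorted_wrt (<) (map (\<lambda>j. j - 1) js)"
  unfolding sorted_wrt_map
proof (rule sorted_wrt_mono_rel[OF _ assms(1)])
  fix x y assume "x \<in> set js" "y \<in> set js" "x < y"
  moreover have "0 < x" using assms(2) \<open>x \<in> set js\<close> by blast
  ultimately show "x - 1 < y - 1" by (intro diff_less_mono) auto
qed

lemma nths_construct:
  "sorted_wrt (<) is \<Longrightarrow> \<forall>i\<in>set is. i<length xs \<Longrightarrow> nths xs (set is) = map (nth xs) is"
proof (induction xs arbitrary: "is")
  case Nil
  then show ?case by (cases "is") auto
next
  case (Cons x xs)
  show ?case
  proof (cases "is")
    case Nil
    then show ?thesis by simp
  next
    case (Cons i is')
    show ?thesis
    proof (cases i)
      case 0
      have pos: "\<forall>j\<in>set is'. j > 0" using Cons.prems \<open>is = i # is'\<close> 0 by auto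
      have sh: "{j. Suc j \<in> set is} = set (map (\<lambda>j. j - 1) is')"
        using shift_set[OF pos] \<open>is = i # is'\<close> 0 by simp
      have s: "sorted_wrt (<) (map (\<lambda>j. j - 1) is')"
        by (rule sorted_shift) (use Cons.prems \<open>is = i # is'\<close> pos in auto)
      have l: "\<forall>j\<in>set (map (\<lambda>j. j - 1) is'). j < length xs"
        using Cons.prems \<open>is = i # is'\<close> pos by auto
      have "nths xs {j. Suc j \<in> set is} = map (nth xs) (map (\<lambda>j. j - 1) is')"
        unfolding sh by (rule Cons.IH[OF s l])
      moreover have "map (nth (x#xs)) is' = map (nth xs) (map (\<lambda>j. j - 1) is')"
        unfolding map_map by (rule map_cong[OF refl]) (use pos in \<open>auto simp: nth_Cons'\<close>)
      ultimately show ?thesis using \<open>is = i # is'\<close> 0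
        by (simp add: nths_Cons)
    next
      case (Suc i')
      have pos: "\<forall>j\<in>set is. j > 0" using Cons.prems \<open>is = i # is'\<close> Suc by auto
      have sh: "{j. Suc j \<in> set is} = set (map (\<lambda>j. j - 1) is)"
        using shift_set[OF pos] .
      have s: "sorted_wrt (<) (map (\<lambda>j. j - 1) is)"
        by (rule sorted_shift) (use Cons.prems pos in auto)
      have l: "\<forall>j\<in>set (map (\<lambda>j. j - 1) is). j < length xs"
        using Cons.prems pos by auto
      have "nths xs {j. Suc j \<in> set is} = map (nth xs) (map (\<lambda>j. j - 1) is)"
        unfolding sh by (rule Cons.IH[OF s l])
      moreover have "map (nth (x#xs)) is = map (nth xs) (map (\<lambda>j. j - 1) is)"
        unfolding map_map by (rule map_cong[OF refl]) (use pos in \<open>auto simp: nth_Cons'\<close>)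
      moreover have "0 \<notin> set is" using pos by auto
      ultimately show ?thesis
        by (simp add: nths_Cons)
    qed
  qed
qed

lemma oi_A: "order_iso [p,q,r,s] [0,1,2,1] \<longleftrightarrow> p<q \<and> q<r \<and> s=q"
proof
  assume "order_iso [p,q,r,s] [0,1,2,1]"
  then have h: "\<And>a b. a<4 \<Longrightarrow> b<4 \<Longrightarrow> ([p,q,r,s]!a < [p,q,r,s]!b \<longleftrightarrow> ([0,1,2,1]::nat list)!a < ([0,1,2,1]::nat list)!b) \<and> ([p,q,r,s]!a = [p,q,r,s]!b \<longleftrightarrow> ([0,1,2,1]::nat list)!a = ([0,1,2,1]::nat list)!b)"
    unfolding order_iso_def by auto
  show "p<q \<and> q<r \<and> s=q" using h[of 0 1] h[of 1 2] h[of 3 1] by simp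
next
  assume "p<q \<and> q<r \<and> s=q"
  then show "order_iso [p,q,r,s] [0,1,2,1]"
    unfolding order_iso_def by (simp add: less_Suc_eq numeral_eq_Suc)
qed

lemma oi_B: "order_iso [p,q,r,s] [0,1,3,2] \<longleftrightarrow> p<q \<and> q<s \<and> s<r"
proof
  assume "order_iso [p,q,r,s] [0,1,3,2]"
  then have h: "\<And>a b. a<4 \<Longrightarrow> b<4 \<Longrightarrow> ([p,q,r,s]!a < [p,q,r,s]!b \<longleftrightarrow> ([0,1,3,2]::nat list)!a < ([0,1,3,2]::nat list)!b) \<and> ([p,q,r,s]!a = [p,q,r,s]!b \<longleftrightarrow> ([0,1,3,2]::nat list)!a = ([0,1,3,2]::nat list)!b)"
    unfolding order_iso_def by auto
  show "p<q \<and> q<s \<and> s<r" using h[of 0 1] h[of 1 3] h[of 3 2] by simp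
next
  assume "p<q \<and> q<s \<and> s<r"
  then show "order_iso [p,q,r,s] [0,1,3,2]"
    unfolding order_iso_def by (simp add: less_Suc_eq numeral_eq_Suc)
qed

lemma oi_C: "order_iso [p,q,r,s] [1,0,3,2] \<longleftrightarrow> q<p \<and> p<s \<and> s<r"
proof
  assume "order_iso [p,q,r,s] [1,0,3,2]"
  then have h: "\<And>a b. a<4 \<Longrightarrow> b<4 \<Longrightarrow> ([p,q,r,s]!a < [p,q,r,s]!b \<longleftrightarrow> ([1,0,3,2]::nat list)!a < ([1,0,3,2]::nat list)!b) \<and> ([p,q,r,s]!a = [p,q,r,s]!b \<longleftrightarrow> ([1,0,3,2]::nat list)!a = ([1,0,3,2]::nat list)!b)"
    unfolding order_iso_def by auto
  show "q<p \<and> p<s \<and> s<r" using h[of 1 0] h[of 0 3] h[of 3 2] by simp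
next
  assume "q<p \<and> p<s \<and> s<r"
  then show "order_iso [p,q,r,s] [1,0,3,2]"
    unfolding order_iso_def by (simp add: less_Suc_eq numeral_eq_Suc)
qed

lemma contains4:
  "contains xs [a,b,c,d] \<longleftrightarrow> (\<exists>i j k l. i<j \<and> j<k \<and> k<l \<and> l<length xs \<and>
      order_iso [xs!i,xs!j,xs!k,xs!l] [a,b,c,d])"
proof
  assume "contains xs [a,b,c,d]"
  then obtain I where I: "I \<subseteq> {..<length xs}" "order_iso (nths xs I) [a,b,c,d]"
    unfolding contains_def by blast
  then have len: "length (nths xs I) = 4" by (simp add: order_iso_def)
  obtain f where f1: "\<And>a b. a<b \<Longrightarrow> b<4 \<Longrightarrow> f a < f b"
     and f2: "\<And>t. t<4 \<Longrightarrow> f t < length xs \<and> nths xs I!t = xs!(f t)"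
    using nths_extract[OF refl, of xs I] unfolding len by blast
  have e0: "nths xs I!0 = xs!f 0" using f2[of 0] by simp
  have e1: "nths xs I!1 = xs!f 1" using f2[of 1] by simp
  have e2: "nths xs I!2 = xs!f 2" using f2[of 2] by simp
  have e3: "nths xs I!3 = xs!f 3" using f2[of 3] by simp
  have eq: "nths xs I = [xs!f 0, xs!f 1, xs!f 2, xs!f 3]"
  proof (rule nth_equalityI)
    show "length (nths xs I) = length [xs!f 0, xs!f 1, xs!f 2, xs!f 3]" using len by simp
    fix t assume "t < length (nths xs I)"
    then have "t = 0 \<or> t = 1 \<or> t = 2 \<or> t = 3" using len by linarith
    then show "nths xs I ! t = [xs!f 0, xs!f 1, xs!f 2, xs!f 3] ! t"
      using e0 e1 e2 e3 by auto
  qed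
  have "f 0 < f 1" "f 1 < f 2" "f 2 < f 3" "f 3 < length xs" using f1 f2 by auto
  moreover have "order_iso [xs!f 0, xs!f 1, xs!f 2, xs!f 3] [a,b,c,d]" using I(2) eq by simp
  ultimately show "\<exists>i j k l. i<j \<and> j<k \<and> k<l \<and> l<length xs \<and>
      order_iso [xs!i,xs!j,xs!k,xs!l] [a,b,c,d]" by blast
next
  assume "\<exists>i j k l. i<j \<and> j<k \<and> k<l \<and> l<length xs \<and>
      order_iso [xs!i,xs!j,xs!k,xs!l] [a,b,c,d]"
  then obtain i j k l where h: "i<j" "j<k" "k<l" "l<length xs"
      "order_iso [xs!i,xs!j,xs!k,xs!l] [a,b,c,d]" by blast
  have "nths xs (set [i,j,k,l]) = map (nth xs) [i,j,k,l]"
    by (rule nths_construct) (use h in auto)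
  moreover have "set [i,j,k,l] \<subseteq> {..<length xs}" using h by auto
  ultimately show "contains xs [a,b,c,d]" unfolding contains_def using h(5)
    by (intro exI[of _ "set [i,j,k,l]"]) simp
qed


lemma asc_first: "is_ascent_seq xs \<Longrightarrow> 0 < length xs \<Longrightarrow> xs!0 = 0"
  unfolding is_ascent_seq_def by auto

lemma L1: assumes "is_ascent_seq xs" "contains xs [1,0,3,2]" shows "contains xs [0,1,3,2]"
proof -
  obtain i j k l where h: "i<j" "j<k" "k<l" "l<length xs" "xs!j<xs!i" "xs!i<xs!l" "xs!l<xs!k"
    using assms(2) unfolding contains4 oi_C by blast
  have "xs!0 = 0" by (rule asc_first[OF assms(1)]) (use h in auto)
  then have "0 < i" using h by (metis gr0I not_less0)
  then show ?thesis unfolding contains4 oi_B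
    by (intro exI[of _ 0] exI[of _ i] exI[of _ k] exI[of _ l]) (use h \<open>xs!0 = 0\<close> in auto)
qed

lemma asc_le_last:
  assumes mono: "\<forall>a b. a < b \<longrightarrow> b < length ys \<longrightarrow> ys!a \<le> ys!b" and ne: "ys \<noteq> []"
  shows "asc_count ys \<le> ys ! (length ys - 1)"
proof -
  let ?J = "{j. Suc j < length ys \<and> ys ! j < ys ! Suc j}"
  have inj: "inj_on (\<lambda>j. ys ! Suc j) ?J"
  proof (rule inj_onI)
    fix x y assume x: "x \<in> ?J" and y: "y \<in> ?J" and e: "ys ! Suc x = ys ! Suc y"
    show "x = y"
    proof (rule ccontr)
      assume "x \<noteq> y"
      then consider "x < y" | "y < x" by linarith
      then show False
      proof cases
        case 1
        then have "ys ! Suc x \<le> ys ! y" using mono y by (cases "Suc x = y") auto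
        then show False using y e by auto
      next
        case 2
        then have "ys ! Suc y \<le> ys ! x" using mono x by (cases "Suc y = x") auto
        then show False using x e by auto
      qed
    qed
  qed
  have sub: "(\<lambda>j. ys ! Suc j) ` ?J \<subseteq> {1..ys ! (length ys - 1)}"
  proof
    fix v assume "v \<in> (\<lambda>j. ys ! Suc j) ` ?J"
    then obtain j where j: "j \<in> ?J" "v = ys ! Suc j" by blast
    have "ys ! Suc j \<le> ys ! (length ys - 1)" using mono j(1)
      by (cases "Suc j = length ys - 1") auto
    then show "v \<in> {1..ys ! (length ys - 1)}" using j by auto
  qed
  have "card ?J \<le> card {1..ys ! (length ys - 1)}"
    by (rule card_inj_on_le[OF inj sub]) simp
  then show ?thesis unfolding asc_count_def by simp
qed

lemma L2:
  assumes asc: "is_ascent_seq xs" and nA: "\<not> contains xs [0,1,2,1]" and nC: "\<not> contains xs [1,0,3,2]"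
    and h: "k < l" "l < length xs" "0 < xs!l" "xs!l < xs!k"
  shows False
proof -
  have x0: "xs!0 = 0" by (rule asc_first[OF asc]) (use h in auto)
  define q where "q = (LEAST q. xs!l \<le> xs!q)"
  have qk: "q \<le> k" unfolding q_def by (rule Least_le) (use h in simp)
  have q1: "xs!l \<le> xs!q" unfolding q_def by (rule LeastI[of _ k]) (use h in simp)
  have below: "xs!p < xs!l" if "p < q" for p
  proof -
    have "\<not> xs!l \<le> xs!p" using not_less_Least[of p "\<lambda>q. xs!l \<le> xs!q"] that unfolding q_def by blast
    then show ?thesis by simp
  qed
  have q0: "0 < q" using q1 x0 h(3) by (cases q) auto
  have qgt: "xs!l < xs!q"
  proof (rule ccontr)
    assume "\<not> xs!l < xs!q"
    then have eq: "xs!q = xs!l" using q1 by auto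
    then have "q \<noteq> k" using h by auto
    then have "q < k" using qk by auto
    then have "contains xs [0,1,2,1]" unfolding contains4 oi_A
      by (intro exI[of _ 0] exI[of _ q] exI[of _ k] exI[of _ l]) (use h q0 x0 eq in auto)
    then show False using nA by blast
  qed
  have mono: "\<forall>a b. a < b \<longrightarrow> b < length (take q xs) \<longrightarrow> take q xs!a \<le> take q xs!b"
  proof (intro allI impI)
    fix a b assume ab: "a < b" "b < length (take q xs)"
    then have bq: "b < q" by simp
    show "take q xs!a \<le> take q xs!b"
    proof (rule ccontr)
      assume "\<not> take q xs!a \<le> take q xs!b"
      then have "xs!b < xs!a" using ab bq by simp
      moreover have "xs!a < xs!l" using below ab bq by auto
      ultimately have "contains xs [1,0,3,2]" unfolding contains4 oi_C
        by (intro exI[of _ a] exI[of _ b] exI[of _ k] exI[of _ l]) (use h ab bq qk in auto)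
      then show False using nC by blast
    qed
  qed
  have lq: "q < length xs" using qk h by auto
  have "asc_count (take q xs) \<le> take q xs ! (length (take q xs) - 1)"
    by (rule asc_le_last[OF mono]) (use q0 lq in auto)
  also have "\<dots> = xs ! (q - 1)" using q0 lq by simp
  also have "\<dots> < xs!l" using below q0 by auto
  finally have "asc_count (take q xs) < xs!l" .
  moreover have "xs!q \<le> 1 + asc_count (take q xs)" using asc q0 lq unfolding is_ascent_seq_def by auto
  ultimately show False using qgt by auto
qed

lemma L2': assumes "is_ascent_seq xs" "\<not> contains xs [0,1,2,1]" "contains xs [0,1,3,2]"
  shows "contains xs [1,0,3,2]"
proof (rule ccontr)
  assume nC: "\<not> contains xs [1,0,3,2]"
  obtain i j k l where h: "i<j" "j<k" "k<l" "l<length xs" "xs!i<xs!j" "xs!j<xs!l" "xs!l<xs!k"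
    using assms(3) unfolding contains4 oi_B by blast
  show False by (rule L2[OF assms(1,2) nC, of k l]) (use h in auto)
qed

theorem mainTheorem4:
  fixes n :: nat
  assumes "n \<ge> 1"
  shows "S n {[0,1,2,1], [0,1,3,2]} = S n {[0,1,2,1], [1,0,3,2]} \<and>
         S n {[0,1,2,1], [1,0,3,2]} = S n {[0,1,2,1], [0,1,3,2], [1,0,3,2]}"
  unfolding S_def avoids_def using L1 L2' by auto

end
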